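(* Let $G$ be a finite simple triangle-free graph having a perfect matching $M$. Let $h$ denote the number of connected components of the graph $G\setminus M$ (the spanning subgraph of $G$ with edge set $E(G)\setminus M$). Let $OPT$ denote the number of colours in an optimal (maximum) edge $2$-colouring of $G$. Then $$OPT\leq \frac{8}{5}\bigl(|M|+h\bigr).$$
   Context: An edge $2$-colouring of a graph $G$ is an assignment of colours to the edges of $G$ (not necessarily proper) such that, at every vertex, the edges incident with that vertex carry at most $2$ distinct colours. An optimal edge $2$-colouring is one that uses the maximum possible number of distinct colours; $OPT$ is that maximum number. *)

theory Defs
  imports Complex_Main
begin

definition simple_graph :: "'a set \<Rightarrow> 'a set set \<Rightarrow> bool" where
  "simple_graph V E \<longleftrightarrow> finite V \<and> (\<forall>e\<in>E. e \<subseteq> V \<and> card e = 2)"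

definition triangle_free :: "'a set set \<Rightarrow> bool" where
  "triangle_free E \<longleftrightarrow> \<not> (\<exists>a b c. {a,b} \<in> E \<and> {b,c} \<in> E \<and> {a,c} \<in> E)"

definition perfect_matching :: "'a set \<Rightarrow> 'a set set \<Rightarrow> 'a set set \<Rightarrow> bool" where
  "perfect_matching V E M \<longleftrightarrow> M \<subseteq> E \<and>
     (\<forall>e1\<in>M. \<forall>e2\<in>M. e1 \<noteq> e2 \<longrightarrow> e1 \<inter> e2 = {}) \<and>
     (\<forall>v\<in>V. \<exists>e\<in>M. v \<in> e)"

definition connected_rel :: "'a set \<Rightarrow> 'a set set \<Rightarrow> ('a \<times> 'a) set" where
  "connected_rel V E = {(u,v). u \<in> V \<and> v \<in> V \<and> (u,v) \<in> ({(x,y). {x,y} \<in> E})\<^sup>*}"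

definition num_components :: "'a set \<Rightarrow> 'a set set \<Rightarrow> nat" where
  "num_components V E = card (V // connected_rel V E)"

definition edge_2_colouring :: "'a set \<Rightarrow> 'a set set \<Rightarrow> ('a set \<Rightarrow> nat) \<Rightarrow> bool" where
  "edge_2_colouring V E c \<longleftrightarrow> (\<forall>v\<in>V. card (c ` {e\<in>E. v \<in> e}) \<le> 2)"

definition OPT :: "'a set \<Rightarrow> 'a set set \<Rightarrow> nat" where
  "OPT V E = Max {card (c ` E) | c. edge_2_colouring V E c}"

end

theory Submission
  imports Defs
begin

lemma dcount:
  assumes "finite A" "finite B"
  shows "(\<Sum>x\<in>A. card {y\<in>B. R x y}) = (\<Sum>y\<in>B. card {x\<in>A. R x y})"
  using sum.swap_restrict[OF assms, of "\<lambda>_ _. (1::nat)" R] by simp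

lemma conn_equiv: "equiv V (connected_rel V E)"
proof -
  have s: "sym {(x,y). {x,y} \<in> E}" by (auto simp: sym_def insert_commute)
  have s2: "sym (({(x,y). {x,y} \<in> E})\<^sup>*)" using sym_rtrancl[OF s] .
  show ?thesis
  proof (rule equivI)
    show "refl_on V (connected_rel V E)" unfolding refl_on_def connected_rel_def by auto
    show "connected_rel V E \<subseteq> V \<times> V" unfolding connected_rel_def by auto
    show "sym (connected_rel V E)" using s2 unfolding sym_def connected_rel_def by blast
    show "trans (connected_rel V E)" unfolding trans_def connected_rel_def
      by (auto intro: rtrancl_trans)
  qed
qed

lemma path_lemma:
  assumes "(x,y) \<in> ({(a,b). {a,b} \<in> E'})\<^sup>*"
    and "\<And>e. e \<in> E' \<Longrightarrow> e \<notin> E1 \<Longrightarrow> e \<subseteq> W"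
  shows "(x,y) \<in> ({(a,b). {a,b} \<in> E1})\<^sup>* \<or> (\<exists>w\<in>W. (x,w) \<in> ({(a,b). {a,b} \<in> E1})\<^sup>*)"
  using assms(1)
proof (induction rule: rtrancl_induct)
  case base
  then show ?case by simp
next
  case (step y z)
  show ?case
  proof (cases "{y,z} \<in> E1")
    case True
    with step show ?thesis
      by (meson case_prodI mem_Collect_eq rtrancl.rtrancl_into_rtrancl)
  next
    case False
    with step assms(2) have "y \<in> W" by auto
    with step show ?thesis by blast
  qed
qed

lemma merge_step:
  assumes fin: "finite V" and WV: "W \<subseteq> V" and sub: "E1 \<subseteq> E'"
    and out: "\<And>e. e \<in> E' \<Longrightarrow> e \<notin> E1 \<Longrightarrow> e \<subseteq> W"
  shows "num_components V E1 \<le> num_components V E' + (card W - 1)"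
proof -
  define R1 where "R1 = connected_rel V E1"
  define R where "R = connected_rel V E'"
  have eq1: "equiv V R1" and eq: "equiv V R" unfolding R1_def R_def by (rule conn_equiv)+
  have R1R: "R1 \<subseteq> R"
    unfolding R1_def R_def connected_rel_def
    using rtrancl_mono[of "{(a,b). {a,b} \<in> E1}" "{(a,b). {a,b} \<in> E'}"] sub by auto
  define \<Phi> where "\<Phi> X = R `` X" for X
  have Phi_cls: "\<Phi> (R1``{x}) = R``{x}" if "x \<in> V" for x
  proof
    show "\<Phi> (R1``{x}) \<subseteq> R``{x}"
    proof
      fix z assume "z \<in> \<Phi> (R1``{x})"
      then obtain y where "(x,y) \<in> R1" "(y,z) \<in> R" unfolding \<Phi>_def by auto
      then have "(x,y) \<in> R" using R1R by blast
      with \<open>(y,z) \<in> R\<close> have "(x,z) \<in> R" using eq unfolding equiv_def trans_def by blast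
      then show "z \<in> R``{x}" by simp
    qed
    show "R``{x} \<subseteq> \<Phi> (R1``{x})"
      unfolding \<Phi>_def using eq1 that by (auto simp: equiv_def refl_on_def)
  qed
  define Nm where "Nm = {X \<in> V//R1. X \<inter> W = {}}"
  define Mt where "Mt = {X \<in> V//R1. X \<inter> W \<noteq> {}}"
  have keyA: "X = Y" if X: "X \<in> Nm" and Y: "Y \<in> V//R1" and ph: "\<Phi> X = \<Phi> Y" for X Y
  proof -
    obtain x where x: "x \<in> V" "X = R1``{x}" using X unfolding Nm_def by (auto elim: quotientE)
    obtain y where y: "y \<in> V" "Y = R1``{y}" using Y by (auto elim: quotientE)
    have "R``{x} = R``{y}" using ph x y Phi_cls by simp
    then have "(x,y) \<in> R" using eq x y by (simp add: eq_equiv_class_iff)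
    then have p: "(x,y) \<in> ({(a,b). {a,b} \<in> E'})\<^sup>*" unfolding R_def connected_rel_def by simp
    from path_lemma[OF p out] show ?thesis
    proof
      assume "(x,y) \<in> ({(a,b). {a,b} \<in> E1})\<^sup>*"
      then have "(x,y) \<in> R1" unfolding R1_def connected_rel_def using x y by simp
      then show ?thesis using eq1 x y by (simp add: eq_equiv_class_iff)
    next
      assume "\<exists>w\<in>W. (x,w) \<in> ({(a,b). {a,b} \<in> E1})\<^sup>*"
      then obtain w where "w \<in> W" "(x,w) \<in> ({(a,b). {a,b} \<in> E1})\<^sup>*" by blast
      then have "w \<in> X" using x WV unfolding R1_def connected_rel_def by auto
      with \<open>w \<in> W\<close> X show ?thesis unfolding Nm_def by auto
    qed
  qed
  have finQ1: "finite (V//R1)" using fin eq1 by (simp add: finite_quotient equiv_type)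
  have finQ: "finite (V//R)" using fin eq by (simp add: finite_quotient equiv_type)
  have PhiQ: "\<Phi> X \<in> V//R" if "X \<in> V//R1" for X
    using that Phi_cls by (auto elim!: quotientE intro: quotientI)
  have split: "V//R1 = Nm \<union> Mt" "Nm \<inter> Mt = {}" unfolding Nm_def Mt_def by auto
  have cardQ1: "card (V//R1) = card Nm + card Mt"
  proof -
    have "finite Nm" "finite Mt" using split finQ1 by (auto intro: finite_subset)
    then show ?thesis using split card_Un_disjoint by metis
  qed
  have injN: "inj_on \<Phi> Nm" using keyA unfolding inj_on_def Nm_def by auto
  have disj: "\<Phi> ` Nm \<inter> \<Phi> ` Mt = {}"
  proof -
    have "\<Phi> X \<noteq> \<Phi> Y" if "X \<in> Nm" "Y \<in> Mt" for X Y
      using keyA[of X Y] that unfolding Nm_def Mt_def by auto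
    then show ?thesis by blast
  qed
  have sub2: "\<Phi> ` Nm \<union> \<Phi> ` Mt \<subseteq> V//R" using PhiQ split by auto
  have finW: "finite W" using WV fin finite_subset by blast
  have MtW: "Mt \<subseteq> (\<lambda>w. R1``{w}) ` W"
  proof
    fix X assume "X \<in> Mt"
    then obtain x w where x: "x \<in> V" "X = R1``{x}" and w: "w \<in> W" "w \<in> X"
      unfolding Mt_def by (auto elim!: quotientE)
    have "(x,w) \<in> R1" using x w by simp
    then have "R1``{x} = R1``{w}" using eq1 by (simp add: equiv_class_eq_iff)
    with x w show "X \<in> (\<lambda>w. R1``{w}) ` W" by auto
  qed
  have cMt: "card Mt \<le> card W"
    using order_trans[OF card_mono[OF finite_imageI[OF finW] MtW] card_image_le[OF finW]] .
  have cN: "card Nm = card (\<Phi> ` Nm)" using injN by (simp add: card_image)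
  show ?thesis
  proof (cases "Mt = {}")
    case True
    have "card (\<Phi> ` Nm) \<le> card (V//R)" using sub2 finQ by (meson card_mono le_sup_iff)
    then show ?thesis unfolding num_components_def R1_def[symmetric] R_def[symmetric]
      using cardQ1 cN True by simp
  next
    case False
    then have "\<Phi> ` Mt \<noteq> {}" by simp
    moreover have "finite (\<Phi> ` Mt)" using finQ1 split by simp
    ultimately have "card (\<Phi> ` Mt) \<ge> 1" by (simp add: Suc_le_eq card_gt_0_iff)
    moreover have "card (\<Phi> ` Nm) + card (\<Phi> ` Mt) \<le> card (V//R)"
    proof -
      have "finite (\<Phi> ` Nm)" "finite (\<Phi> ` Mt)" using finQ sub2 by (auto intro: finite_subset)
      then have "card (\<Phi> ` Nm \<union> \<Phi> ` Mt) = card (\<Phi> ` Nm) + card (\<Phi> ` Mt)"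
        using disj by (simp add: card_Un_disjoint)
      then show ?thesis using card_mono[OF finQ sub2] by simp
    qed
    ultimately show ?thesis unfolding num_components_def R1_def[symmetric] R_def[symmetric]
      using cardQ1 cN cMt by linarith
  qed
qed

lemma nc_empty:
  assumes "finite V"
  shows "card V \<le> num_components V {}"
proof -
  have "connected_rel V {} = Id_on V" unfolding connected_rel_def by auto
  moreover have "V // Id_on V = (\<lambda>x. {x}) ` V" unfolding quotient_def by auto
  moreover have "card ((\<lambda>x. {x}) ` V) = card V" by (simp add: card_image inj_on_def)
  ultimately show ?thesis unfolding num_components_def by simp
qed

lemma merge:
  assumes "finite V" "finite I" "\<And>i. i \<in> I \<Longrightarrow> W i \<subseteq> V"
    and "\<And>e. e \<in> E' \<Longrightarrow> \<exists>i\<in>I. e \<subseteq> W i"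
    and "\<And>e. e \<in> E' \<Longrightarrow> e \<noteq> {}"
  shows "card V \<le> num_components V E' + (\<Sum>i\<in>I. card (W i) - 1)"
  using assms(2-5)
proof (induction I arbitrary: E' rule: finite_induct)
  case empty
  then have "E' = {}" by auto
  then show ?case using nc_empty[OF assms(1)] by simp
next
  case (insert i I)
  define E1 where "E1 = {e\<in>E'. \<exists>j\<in>I. e \<subseteq> W j}"
  have IH: "card V \<le> num_components V E1 + (\<Sum>j\<in>I. card (W j) - 1)"
    using insert.IH[of E1] insert.prems unfolding E1_def by auto
  have st: "num_components V E1 \<le> num_components V E' + (card (W i) - 1)"
  proof (rule merge_step[OF assms(1)])
    show "W i \<subseteq> V" using insert.prems by auto
    show "E1 \<subseteq> E'" unfolding E1_def by auto
    fix e assume "e \<in> E'" "e \<notin> E1"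
    then show "e \<subseteq> W i" using insert.prems(2)[of e] unfolding E1_def by auto
  qed
  show ?case using IH st insert.hyps by simp
qed

lemma two_sub3:
  assumes "e \<subseteq> {x,y,z}" "card e = 2"
  shows "e = {x,y} \<or> e = {x,z} \<or> e = {y,z}"
proof -
  obtain a b where ab: "e = {a,b}" "a \<noteq> b" using assms(2) card_2_iff by metis
  then show ?thesis using assms(1) by auto
qed

lemma two_sub4:
  assumes "e \<subseteq> {x,x',y,y'}" "card e = 2"
  shows "e = {x,x'} \<or> e = {y,y'} \<or> e = {x,y} \<or> e = {x,y'} \<or> e = {x',y} \<or> e = {x',y'}"
proof -
  obtain a b where ab: "e = {a,b}" "a \<noteq> b" using assms(2) card_2_iff by metis
  then show ?thesis using assms(1) by (auto simp: insert_commute)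
qed

lemma card_le2: "A \<subseteq> {a,b} \<Longrightarrow> card A \<le> 2"
proof -
  assume "A \<subseteq> {a,b}"
  then have "card A \<le> card {a,b}" by (rule card_mono[rotated]) simp
  also have "card {a,b} \<le> 2" by (cases "a = b") auto
  finally show ?thesis .
qed

locale L =
  fixes V :: "'a set" and E M :: "'a set set" and col :: "'a set \<Rightarrow> nat"
  assumes finV: "finite V" and sg: "simple_graph V E"
    and tf: "triangle_free E" and pm: "perfect_matching V E M"
    and colr: "edge_2_colouring V E col"
begin

definition "C = col ` E"
definition "Sc c = {v\<in>V. \<exists>e\<in>E. v \<in> e \<and> col e = c}"
definition "Mc c = {e\<in>M. col e = c}"
definition "Pc c = {v\<in>V. \<exists>e\<in>M. v \<in> e \<and> col e = c}"
definition "NM c = {e\<in>E-M. col e = c}"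
definition "B = {c\<in>C. \<exists>e0\<in>E-M. \<forall>e\<in>E. col e = c \<longleftrightarrow> e = e0}"
definition "hasB v = (\<exists>b\<in>B. v \<in> Sc b)"
definition "beta c = card {v\<in>Pc c. hasB v}"
definition "gam c = card {v\<in>Sc c. c \<in> B}"
definition "big c = (6 \<le> 2 * card (Sc c) - card (Pc c))"
definition "rho c = (if big c then card (Sc c) - 1 else card (NM c))"
definition "Wf c = (if big c then {Sc c} else NM c)"

lemma edgeV: "e \<in> E \<Longrightarrow> e \<subseteq> V" using sg unfolding simple_graph_def by auto
lemma edge2: "e \<in> E \<Longrightarrow> card e = 2" using sg unfolding simple_graph_def by auto
lemma finE: "finite E"
proof -
  have "E \<subseteq> Pow V" using edgeV by auto
  then show ?thesis using finV finite_subset by blast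
qed
lemma MsubE: "M \<subseteq> E" using pm unfolding perfect_matching_def by auto
lemma Mdisj: "e1 \<in> M \<Longrightarrow> e2 \<in> M \<Longrightarrow> e1 \<noteq> e2 \<Longrightarrow> e1 \<inter> e2 = {}"
  using pm unfolding perfect_matching_def by auto
lemma Mcover: "v \<in> V \<Longrightarrow> \<exists>e\<in>M. v \<in> e" using pm unfolding perfect_matching_def by auto
lemma tri: "{a,b} \<in> E \<Longrightarrow> {b,c} \<in> E \<Longrightarrow> {a,c} \<in> E \<Longrightarrow> False"
  using tf unfolding triangle_free_def by blast
lemma col2: "v \<in> V \<Longrightarrow> card (col ` {e\<in>E. v \<in> e}) \<le> 2"
  using colr unfolding edge_2_colouring_def by auto

lemma finSc: "finite (Sc c)" unfolding Sc_def using finV by auto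
lemma Pc_eq: "Pc c = \<Union>(Mc c)"
  unfolding Pc_def Mc_def using MsubE edgeV by blast
lemma Pc_sub: "Pc c \<subseteq> Sc c" unfolding Pc_def Sc_def using MsubE by blast
lemma card_Pc: "card (Pc c) = 2 * card (Mc c)"
proof -
  have pw: "pairwise disjnt (Mc c)" unfolding pairwise_def disjnt_def Mc_def using Mdisj by auto
  have fin: "\<And>A. A \<in> Mc c \<Longrightarrow> finite A" unfolding Mc_def using MsubE edge2
    by (metis (no_types, lifting) card.infinite mem_Collect_eq subsetD zero_neq_numeral)
  have "card (Pc c) = sum card (Mc c)" unfolding Pc_eq using card_Union_disjoint[OF pw fin] by simp
  also have "\<dots> = sum (\<lambda>_. 2) (Mc c)" 
    by (rule sum.cong) (use MsubE edge2 in \<open>auto simp: Mc_def\<close>)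
  finally show ?thesis by simp
qed
lemma NM_sub: "e \<in> NM c \<Longrightarrow> e \<subseteq> Sc c" unfolding NM_def Sc_def using edgeV by auto
lemma finNM: "finite (NM c)" unfolding NM_def using finE by auto
lemma finM: "finite M" using finite_subset[OF MsubE finE] .
lemma finMc: "finite (Mc c)" unfolding Mc_def using finM by simp

end

context L begin

lemma percol:
  assumes cC: "c \<in> C"
  shows "10 + 4 * rho c + beta c \<le> 6 * card (Sc c) + gam c"
proof -
  have finPc: "finite (Pc c)" using finite_subset[OF Pc_sub finSc] .
  have betaP: "beta c \<le> card (Pc c)" unfolding beta_def by (rule card_mono[OF finPc]) auto
  have PS: "card (Pc c) \<le> card (Sc c)" by (rule card_mono[OF finSc Pc_sub])
  obtain e0 where e0: "e0 \<in> E" "col e0 = c" using cC unfolding C_def by auto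
  have e0S: "e0 \<subseteq> Sc c" unfolding Sc_def using e0 edgeV by auto
  have fe0: "finite e0" using edge2[OF e0(1)] card.infinite by fastforce
  have t2: "2 \<le> card (Sc c)" using card_mono[OF finSc e0S] edge2[OF e0(1)] by simp
  show ?thesis
  proof (cases "big c")
    case True
    then have "6 + card (Pc c) \<le> 2 * card (Sc c)" unfolding big_def using PS by linarith
    moreover have "rho c = card (Sc c) - 1" using True unfolding rho_def by simp
    ultimately show ?thesis using betaP t2 by linarith
  next
    case False
    then have nb: "2 * card (Sc c) \<le> 5 + card (Pc c)" unfolding big_def using PS by linarith
    have rhoNM: "rho c = card (NM c)" using False unfolding rho_def by simp
    show ?thesis
    proof (cases "c \<in> B")
      case True
      then obtain e1 where e1: "e1 \<in> E - M" "\<And>e. e \<in> E \<Longrightarrow> col e = c \<longleftrightarrow> e = e1"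
        unfolding B_def by blast
      have NM1: "NM c = {e1}" unfolding NM_def using e1 by auto
      have Mc0: "Mc c = {}" unfolding Mc_def using e1 MsubE by auto
      have P0: "card (Pc c) = 0" using card_Pc Mc0 by simp
      have b0: "beta c = 0" using betaP P0 by simp
      have Se: "Sc c = e1" unfolding Sc_def using e1 edgeV by blast
      have "gam c = card (Sc c)" unfolding gam_def using True by simp
      then have "gam c = 2" using Se edge2 e1(1) by simp
      then show ?thesis using rhoNM NM1 b0 Se edge2 e1(1) by simp
    next
      case False
      have g0: "gam c = 0" unfolding gam_def using False by simp
      define p where "p = card (Mc c)"
      have Pp: "card (Pc c) = 2 * p" using card_Pc p_def by simp
      have "p = 0 \<or> p = 1 \<or> p = 2 \<or> p \<ge> 3" by linarith
      moreover {
        assume p0: "p = 0"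
        then have "card (Sc c) \<le> 2" using nb Pp by simp
        then have Se0: "e0 = Sc c" using card_subset_eq[OF finSc e0S] t2 edge2[OF e0(1)] by simp
        have "Mc c = {}" using p0 finMc p_def by simp
        then have e0M: "e0 \<notin> M" using e0 unfolding Mc_def by auto
        have "\<forall>e\<in>E. col e = c \<longleftrightarrow> e = e0"
        proof
          fix e assume eE: "e \<in> E"
          show "col e = c \<longleftrightarrow> e = e0"
          proof
            assume "col e = c"
            then have "e \<subseteq> e0" using Se0 eE edgeV unfolding Sc_def by auto
            then show "e = e0" using card_subset_eq[OF fe0] edge2 eE e0(1) by simp
          qed (use e0 in simp)
        qed
        then have "c \<in> B" unfolding B_def using cC e0 e0M by blast
        with False have ?thesis by simp
      }
      moreover {
        assume p1: "p = 1"
        have "\<exists>em. Mc c = {em}" using p1 p_def card_1_singleton_iff[of "Mc c"] by simp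
        then obtain em where Mce: "Mc c = {em}" by blast
        then have emM: "em \<in> M" unfolding Mc_def by auto
        then have emE: "em \<in> E" using MsubE by auto
        have "\<exists>x x'. em = {x,x'} \<and> x \<noteq> x'" using edge2[OF emE] by (simp add: card_2_iff)
        then obtain x x' where xx: "em = {x,x'}" "x \<noteq> x'" by blast
        have Pe: "Pc c = em" using Pc_eq Mce by simp
        have emS: "em \<subseteq> Sc c" using Pc_sub[of c] Pe by simp
        have t3: "card (Sc c) \<le> 3" using nb Pp p1 by simp
        have NMne: "e \<noteq> em" "e \<subseteq> Sc c" "card e = 2" "e \<in> E" if "e \<in> NM c" for e
          using that emM NM_sub[OF that] edge2 unfolding NM_def by auto
        have NMb: "card (NM c) + 2 \<le> card (Sc c)"
        proof (cases "card (Sc c) = 2")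
          case True
          then have Seq: "em = Sc c" using card_subset_eq[OF finSc emS] edge2[OF emE] by simp
          have "NM c = {}"
          proof (rule ccontr)
            assume "NM c \<noteq> {}"
            then obtain e where e: "e \<in> NM c" by auto
            have fem: "finite em" using xx by simp
            have "e = em" using card_subset_eq[OF fem] NMne[OF e] Seq edge2[OF emE] by simp
            then show False using NMne[OF e] by simp
          qed
          then show ?thesis using True by simp
        next
          case False
          then have t3': "card (Sc c) = 3" using t3 t2 by simp
          have "\<not> Sc c \<subseteq> em"
          proof
            assume "Sc c \<subseteq> em"
            then have "card (Sc c) \<le> card em" using card_mono[of em "Sc c"] xx by simp
            then show False using t3' edge2[OF emE] by simp
          qed
          then obtain z where z: "z \<in> Sc c" "z \<notin> em" by auto
          have sub3: "{x,x',z} \<subseteq> Sc c" using z emS xx by auto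
          have c3: "card {x,x',z} = 3" using z xx by auto
          have S3: "Sc c = {x,x',z}" using card_subset_eq[OF finSc sub3] c3 t3' by simp
          have cases3: "e = {x,z} \<or> e = {x',z}" if "e \<in> NM c" for e
            using two_sub3[of e x x' z] NMne[OF that] S3 xx by auto
          have notboth: "\<not> ({x,z} \<in> NM c \<and> {x',z} \<in> NM c)"
          proof
            assume "{x,z} \<in> NM c \<and> {x',z} \<in> NM c"
            then have a1: "{x,z} \<in> E" and a2: "{x',z} \<in> E" using NMne by blast+
            have a3: "{z,x'} \<in> E" using a2 by (simp add: insert_commute)
            have a4: "{x,x'} \<in> E" using emE xx by simp
            show False using tri[OF a1 a3 a4] .
          qed
          have "card (NM c) \<le> 1"
          proof (cases "{x,z} \<in> NM c")
            case True
            then have "NM c \<subseteq> {{x,z}}" using cases3 notboth by blast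
            then show ?thesis using card_mono[of "{{x,z}}" "NM c"] by simp
          next
            case False
            then have "NM c \<subseteq> {{x',z}}" using cases3 by blast
            then show ?thesis using card_mono[of "{{x',z}}" "NM c"] by simp
          qed
          then show ?thesis using t3' by simp
        qed
        have ?thesis using NMb rhoNM betaP Pp p1 g0 t2 by linarith
      }
      moreover {
        assume p2: "p = 2"
        have "\<exists>e1 e2. Mc c = {e1,e2} \<and> e1 \<noteq> e2" using p2 p_def by (simp add: card_2_iff)
        then obtain e1 e2 where Mce: "Mc c = {e1,e2}" "e1 \<noteq> e2" by blast
        then have eM: "e1 \<in> M" "e2 \<in> M" unfolding Mc_def by auto
        then have eE: "e1 \<in> E" "e2 \<in> E" using MsubE by auto
        have "\<exists>x x'. e1 = {x,x'} \<and> x \<noteq> x'" using edge2[OF eE(1)] by (simp add: card_2_iff)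
        then obtain x x' where xx: "e1 = {x,x'}" "x \<noteq> x'" by blast
        have "\<exists>y y'. e2 = {y,y'} \<and> y \<noteq> y'" using edge2[OF eE(2)] by (simp add: card_2_iff)
        then obtain y y' where yy: "e2 = {y,y'}" "y \<noteq> y'" by blast
        have dj: "e1 \<inter> e2 = {}" using Mdisj eM Mce by simp
        have Pe: "Pc c = {x,x',y,y'}" using Pc_eq Mce xx yy by auto
        have t4: "card (Sc c) \<le> 4" using nb Pp p2 by simp
        have Se: "Sc c = {x,x',y,y'}"
          using card_subset_eq[OF finSc Pc_sub[of c]] Pe Pp p2 t4 PS by simp
        have NMne: "e \<noteq> e1" "e \<noteq> e2" "e \<subseteq> Sc c" "card e = 2" "e \<in> E" if "e \<in> NM c" for e
          using that eM NM_sub[OF that] edge2 unfolding NM_def by auto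
        have cross: "e = {x,y} \<or> e = {x,y'} \<or> e = {x',y} \<or> e = {x',y'}" if "e \<in> NM c" for e
          using two_sub4[of e x x' y y'] NMne[OF that] Se xx yy by auto
        have inE: "e \<in> E" if "e \<in> NM c" for e using NMne[OF that] by simp
        have c1: "{y,x'} = {x',y}" "{y',x'} = {x',y'}" by blast+
        have n1: "\<not> ({x,y} \<in> NM c \<and> {x,y'} \<in> NM c)"
          using tri[of x y y'] inE eE yy by blast
        have n2: "\<not> ({x',y} \<in> NM c \<and> {x',y'} \<in> NM c)"
          using tri[of x' y y'] inE eE yy by blast
        have n3: "\<not> ({x,y} \<in> NM c \<and> {x',y} \<in> NM c)"
          using tri[of x y x'] inE eE xx c1 by metis
        have n4: "\<not> ({x,y'} \<in> NM c \<and> {x',y'} \<in> NM c)"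
          using tri[of x y' x'] inE eE xx c1 by metis
        have "card (NM c) \<le> 2"
        proof (cases "{x,y} \<in> NM c")
          case True
          then have "NM c \<subseteq> {{x,y},{x',y'}}" using cross n1 n3 by blast
          then show ?thesis by (rule card_le2)
        next
          case F1: False
          show ?thesis
          proof (cases "{x',y'} \<in> NM c")
            case True
            then have "NM c \<subseteq> {{x',y'},{x',y'}}" using cross n2 n4 F1 by blast
            then show ?thesis by (rule card_le2)
          next
            case False
            then have "NM c \<subseteq> {{x,y'},{x',y}}" using cross F1 by blast
            then show ?thesis by (rule card_le2)
          qed
        qed
        have ?thesis using rhoNM betaP Pp p2 g0 t4 PS \<open>card (NM c) \<le> 2\<close> by linarith
      }
      moreover {
        assume "p \<ge> 3"
        then have False using nb Pp PS by linarith
      }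
      ultimately show ?thesis by blast
    qed
  qed
qed

end

context L begin

lemma finC: "finite C" unfolding C_def using finE by simp

lemma slots: "(\<Sum>c\<in>C. card (Sc c)) \<le> 2 * card V"
proof -
  have "(\<Sum>c\<in>C. card (Sc c)) = (\<Sum>c\<in>C. card {v\<in>V. \<exists>e\<in>E. v \<in> e \<and> col e = c})"
    unfolding Sc_def by simp
  also have "\<dots> = (\<Sum>v\<in>V. card {c\<in>C. \<exists>e\<in>E. v \<in> e \<and> col e = c})"
    by (rule dcount[OF finC finV])
  also have "\<dots> \<le> (\<Sum>v\<in>V. 2)"
  proof (rule sum_mono)
    fix v assume v: "v \<in> V"
    have "{c\<in>C. \<exists>e\<in>E. v \<in> e \<and> col e = c} = col ` {e\<in>E. v \<in> e}"
    proof
      show "col ` {e\<in>E. v \<in> e} \<subseteq> {c\<in>C. \<exists>e\<in>E. v \<in> e \<and> col e = c}"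
        unfolding C_def by auto
      show "{c\<in>C. \<exists>e\<in>E. v \<in> e \<and> col e = c} \<subseteq> col ` {e\<in>E. v \<in> e}"
      proof
        fix c assume "c \<in> {c\<in>C. \<exists>e\<in>E. v \<in> e \<and> col e = c}"
        then obtain e where "e \<in> E" "v \<in> e" "col e = c" by blast
        then show "c \<in> col ` {e\<in>E. v \<in> e}" by blast
      qed
    qed
    then show "card {c\<in>C. \<exists>e\<in>E. v \<in> e \<and> col e = c} \<le> 2" using col2[OF v] by simp
  qed
  finally show ?thesis by simp
qed

lemma merged: "card V \<le> num_components V (E - M) + (\<Sum>c\<in>C. rho c)"
proof -
  have finW: "finite (Wf c)" for c unfolding Wf_def using finNM by simp
  have WV: "W \<subseteq> V" if W: "W \<in> Wf c" for W c
  proof (cases "big c")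
    case True
    then have "W = Sc c" using W unfolding Wf_def by simp
    then show ?thesis unfolding Sc_def by blast
  next
    case False
    then have "W \<in> E" using W unfolding Wf_def NM_def by simp
    then show ?thesis by (rule edgeV)
  qed
  have m: "card V \<le> num_components V (E - M) + (\<Sum>i\<in>Sigma C Wf. card (snd i) - 1)"
  proof (rule merge[OF finV])
    show "finite (Sigma C Wf)" using finC finW by simp
    show "snd i \<subseteq> V" if "i \<in> Sigma C Wf" for i
    proof -
      from that obtain c W where "i = (c, W)" "W \<in> Wf c" by (cases i) simp
      then show ?thesis using WV by simp
    qed
    show "e \<noteq> {}" if "e \<in> E - M" for e
    proof
      assume "e = {}"
      then show False using edge2[of e] that by simp
    qed
    show "\<exists>i\<in>Sigma C Wf. e \<subseteq> snd i" if e: "e \<in> E - M" for e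
    proof -
      have cC: "col e \<in> C" using e unfolding C_def by simp
      have eN: "e \<in> NM (col e)" using e unfolding NM_def by simp
      show ?thesis
      proof (cases "big (col e)")
        case True
        then have "Sc (col e) \<in> Wf (col e)" unfolding Wf_def by simp
        then have "(col e, Sc (col e)) \<in> Sigma C Wf" using cC by (rule SigmaI[rotated])
        moreover have "e \<subseteq> snd (col e, Sc (col e))" using NM_sub[OF eN] by simp
        ultimately show ?thesis by (rule bexI[rotated])
      next
        case False
        then have "e \<in> Wf (col e)" using eN unfolding Wf_def by simp
        then have "(col e, e) \<in> Sigma C Wf" using cC by (rule SigmaI[rotated])
        moreover have "e \<subseteq> snd (col e, e)" by simp
        ultimately show ?thesis by (rule bexI[rotated])
      qed
    qed
  qed
  have fw: "\<forall>c\<in>C. finite (Wf c)" using finW by blast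
  have s1: "(\<Sum>c\<in>C. \<Sum>W\<in>Wf c. card W - 1) = (\<Sum>(c,W)\<in>Sigma C Wf. card W - 1)"
    by (rule sum.Sigma[OF finC fw])
  have s2: "(\<Sum>(c,W)\<in>Sigma C Wf. card W - 1) = (\<Sum>i\<in>Sigma C Wf. card (snd i) - 1)"
    by (rule sum.cong[OF refl]) (simp add: case_prod_beta)
  have "(\<Sum>i\<in>Sigma C Wf. card (snd i) - 1) = (\<Sum>c\<in>C. \<Sum>W\<in>Wf c. card W - 1)"
    using s1 s2 by simp
  also have "\<dots> = (\<Sum>c\<in>C. rho c)"
  proof (rule sum.cong[OF refl])
    fix c assume "c \<in> C"
    show "(\<Sum>W\<in>Wf c. card W - 1) = rho c"
    proof (cases "big c")
      case True then show ?thesis unfolding Wf_def rho_def by simp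
    next
      case False
      have "(\<Sum>W\<in>NM c. card W - 1) = (\<Sum>W\<in>NM c. 1)"
      proof (rule sum.cong[OF refl])
        fix W assume "W \<in> NM c"
        then have "card W = 2" using edge2 unfolding NM_def by simp
        then show "card W - 1 = 1" by simp
      qed
      then show ?thesis using False unfolding Wf_def rho_def by simp
    qed
  qed
  finally show ?thesis using m by simp
qed

lemma colM_notB: "em \<in> M \<Longrightarrow> col em \<notin> B"
proof
  assume em: "em \<in> M" and "col em \<in> B"
  then obtain e0 where e0: "e0 \<in> E - M" "\<forall>e\<in>E. col e = col em \<longleftrightarrow> e = e0"
    unfolding B_def by blast
  have "em \<in> E" using em MsubE by auto
  then have "em = e0" using e0(2) by blast
  then show False using e0(1) em by simp
qed

lemma gam_beta: "(\<Sum>c\<in>C. gam c) \<le> (\<Sum>c\<in>C. beta c)"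
proof -
  have g: "gam c = card {v\<in>V. (\<exists>e\<in>E. v \<in> e \<and> col e = c) \<and> c \<in> B}" for c
    unfolding gam_def Sc_def by (rule arg_cong[where f=card]) auto
  have b: "beta c = card {v\<in>V. (\<exists>e\<in>M. v \<in> e \<and> col e = c) \<and> hasB v}" for c
    unfolding beta_def Pc_def by (rule arg_cong[where f=card]) auto
  have "(\<Sum>c\<in>C. gam c) = (\<Sum>v\<in>V. card {c\<in>C. (\<exists>e\<in>E. v \<in> e \<and> col e = c) \<and> c \<in> B})"
    unfolding g by (rule dcount[OF finC finV])
  also have "\<dots> \<le> (\<Sum>v\<in>V. card {c\<in>C. (\<exists>e\<in>M. v \<in> e \<and> col e = c) \<and> hasB v})"
  proof (rule sum_mono)
    fix v assume v: "v \<in> V"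
    show "card {c\<in>C. (\<exists>e\<in>E. v \<in> e \<and> col e = c) \<and> c \<in> B}
          \<le> card {c\<in>C. (\<exists>e\<in>M. v \<in> e \<and> col e = c) \<and> hasB v}"
    proof (cases "hasB v")
      case False
      have E0: "{c\<in>C. (\<exists>e\<in>E. v \<in> e \<and> col e = c) \<and> c \<in> B} = {}"
      proof (rule ccontr)
        assume "{c\<in>C. (\<exists>e\<in>E. v \<in> e \<and> col e = c) \<and> c \<in> B} \<noteq> {}"
        then obtain c where c: "\<exists>e\<in>E. v \<in> e \<and> col e = c" "c \<in> B" by blast
        then have "v \<in> Sc c" using v unfolding Sc_def by blast
        then have "hasB v" using c(2) unfolding hasB_def by blast
        then show False using False by simp
      qed
      show ?thesis by (subst E0) simp
    next
      case True
      obtain em where em: "em \<in> M" "v \<in> em" using Mcover[OF v] by blast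
      have emE: "em \<in> E" using em MsubE by auto
      have "col em \<in> {c\<in>C. (\<exists>e\<in>M. v \<in> e \<and> col e = c) \<and> hasB v}"
        using em emE True unfolding C_def by auto
      moreover have "finite {c\<in>C. (\<exists>e\<in>M. v \<in> e \<and> col e = c) \<and> hasB v}" using finC by simp
      ultimately have r: "1 \<le> card {c\<in>C. (\<exists>e\<in>M. v \<in> e \<and> col e = c) \<and> hasB v}"
        by (metis (no_types, lifting) One_nat_def Suc_leI card_gt_0_iff empty_iff)
      have sub: "{c\<in>C. (\<exists>e\<in>E. v \<in> e \<and> col e = c) \<and> c \<in> B} \<subseteq> col ` {e\<in>E. v \<in> e} - {col em}"
        using colM_notB[OF em(1)] by auto
      have fin: "finite (col ` {e\<in>E. v \<in> e})" using finE by simp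
      have cin: "col em \<in> col ` {e\<in>E. v \<in> e}" using em emE by auto
      have "card (col ` {e\<in>E. v \<in> e} - {col em}) \<le> 1"
        using card_Diff_singleton[OF cin] col2[OF v] by simp
      then have "card {c\<in>C. (\<exists>e\<in>E. v \<in> e \<and> col e = c) \<and> c \<in> B} \<le> 1"
        using card_mono[OF finite_Diff[OF fin] sub] by simp
      then show ?thesis using r by simp
    qed
  qed
  also have "\<dots> = (\<Sum>c\<in>C. beta c)"
    unfolding b by (rule dcount[OF finC finV, symmetric])
  finally show ?thesis .
qed

lemma main_ineq: "5 * card C \<le> 4 * card V + 2 * num_components V (E - M)"
proof -
  have "(\<Sum>c\<in>C. 10 + 4 * rho c + beta c) \<le> (\<Sum>c\<in>C. 6 * card (Sc c) + gam c)"
    by (rule sum_mono) (rule percol)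
  moreover have "(\<Sum>c\<in>C. 10 + 4 * rho c + beta c) = 10 * card C + 4 * (\<Sum>c\<in>C. rho c) + (\<Sum>c\<in>C. beta c)"
    by (simp only: sum.distrib sum_distrib_left sum_constant) simp
  moreover have "(\<Sum>c\<in>C. 6 * card (Sc c) + gam c) = 6 * (\<Sum>c\<in>C. card (Sc c)) + (\<Sum>c\<in>C. gam c)"
    by (simp only: sum.distrib sum_distrib_left)
  ultimately have A: "10 * card C + 4 * (\<Sum>c\<in>C. rho c) + (\<Sum>c\<in>C. beta c)
             \<le> 6 * (\<Sum>c\<in>C. card (Sc c)) + (\<Sum>c\<in>C. gam c)" by simp
  have B: "(\<Sum>c\<in>C. card (Sc c)) \<le> 2 * card V" by (rule slots)
  have D: "card V \<le> num_components V (E - M) + (\<Sum>c\<in>C. rho c)" by (rule merged)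
  have G: "(\<Sum>c\<in>C. gam c) \<le> (\<Sum>c\<in>C. beta c)" by (rule gam_beta)
  from A B D G show ?thesis by linarith
qed

end

lemma OPT_bound:
  fixes V :: "'a set" and E M :: "'a set set"
  assumes "simple_graph V E" "triangle_free E" "perfect_matching V E M"
  shows "real (OPT V E) \<le> 8 / 5 * real (card M + num_components V (E - M))"
proof -
  have finV: "finite V" using assms(1) unfolding simple_graph_def by simp
  have EV: "E \<subseteq> Pow V" using assms(1) unfolding simple_graph_def by auto
  have finE: "finite E" using finite_subset[OF EV] finV by simp
  define S where "S = {card (c ` E) | c. edge_2_colouring V E c}"
  have "S \<subseteq> {..card E}"
  proof
    fix x assume "x \<in> S"
    then have "\<exists>c::'a set \<Rightarrow> nat. x = card (c ` E)" unfolding S_def by blast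
    then obtain c :: "'a set \<Rightarrow> nat" where "x = card (c ` E)" by blast
    then show "x \<in> {..card E}" using card_image_le[OF finE, of c] by simp
  qed
  then have finS: "finite S" using finite_subset by blast
  have "edge_2_colouring V E (\<lambda>_. 0)" unfolding edge_2_colouring_def
  proof
    fix v
    have "(\<lambda>_. 0::nat) ` {e\<in>E. v \<in> e} \<subseteq> {0}" by auto
    then have "card ((\<lambda>_. 0::nat) ` {e\<in>E. v \<in> e}) \<le> card {0::nat}" by (rule card_mono[rotated]) simp
    then show "card ((\<lambda>_. 0::nat) ` {e\<in>E. v \<in> e}) \<le> 2" by simp
  qed
  then have "S \<noteq> {}" unfolding S_def by blast
  then have "Max S \<in> S" using finS by simp
  moreover have "OPT V E = Max S" unfolding OPT_def S_def ..
  ultimately have "OPT V E \<in> S" by simp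
  then obtain col where col: "edge_2_colouring V E col" "OPT V E = card (col ` E)"
    unfolding S_def by blast
  interpret L V E M col
    by (rule L.intro) (fact finV, fact assms(1), fact assms(2), fact assms(3), fact col(1))
  have mi: "5 * card (col ` E) \<le> 4 * card V + 2 * num_components V (E - M)"
    using main_ineq unfolding C_def .
  have "V \<subseteq> \<Union>M" using Mcover by blast
  moreover have "\<Union>M \<subseteq> V" using MsubE edgeV by blast
  ultimately have "card V \<le> sum card M" using card_Union_le_sum_card[of M] by simp
  also have "sum card M = sum (\<lambda>_. 2) M" by (rule sum.cong) (use MsubE edge2 in auto)
  finally have "card V \<le> 2 * card M" by simp
  then have "5 * card (col ` E) \<le> 8 * card M + 8 * num_components V (E - M)" using mi by linarith
  then have "5 * OPT V E \<le> 8 * (card M + num_components V (E - M))" using col(2)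
    by (simp add: distrib_left)
  then have "real (5 * OPT V E) \<le> real (8 * (card M + num_components V (E - M)))"
    by (simp only: of_nat_le_iff)
  then show ?thesis by simp
qed

theorem theorem1:
  fixes V :: "'a set" and E M :: "'a set set"
  assumes "simple_graph V E"
    and "triangle_free E"
    and "perfect_matching V E M"
  shows "real (OPT V E) \<le> 8 / 5 * real (card M + num_components V (E - M))"
  using OPT_bound[OF assms] .

end
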